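(* If $P$ is an interval order, then the set $\mathcal{J}^{\neg\downarrow}(P)$ of non-principal ideals of $P$ is a chain under inclusion.
   Context: A poset $P$ is an interval order if it is isomorphic to a set of nonempty intervals of some chain $C$, ordered by $I<J$ iff $x<y$ for every $x\in I$ and every $y\in J$. An ideal of $P$ is a nonempty initial segment of $P$ (closed downward) which is up-directed (any two elements have an upper bound in it); it is principal if it has a largest element. *)

theory Defs
  imports Main
begin

definition poset_on :: "'a set \<Rightarrow> ('a \<Rightarrow> 'a \<Rightarrow> bool) \<Rightarrow> bool" where
  "poset_on P le \<longleftrightarrow>
     (\<forall>x\<in>P. le x x) \<and>
     (\<forall>x\<in>P. \<forall>y\<in>P. le x y \<and> le y x \<longrightarrow> x = y) \<and>
     (\<forall>x\<in>P. \<forall>y\<in>P. \<forall>z\<in>P. le x y \<and> le y z \<longrightarrow> le x z)"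

definition chain_on :: "'c set \<Rightarrow> ('c \<Rightarrow> 'c \<Rightarrow> bool) \<Rightarrow> bool" where
  "chain_on C leC \<longleftrightarrow> poset_on C leC \<and> (\<forall>x\<in>C. \<forall>y\<in>C. leC x y \<or> leC y x)"

definition interval_of :: "'c set \<Rightarrow> ('c \<Rightarrow> 'c \<Rightarrow> bool) \<Rightarrow> 'c set \<Rightarrow> bool" where
  "interval_of C leC I \<longleftrightarrow> I \<noteq> {} \<and> I \<subseteq> C \<and>
     (\<forall>x\<in>I. \<forall>y\<in>I. \<forall>z\<in>C. leC x z \<and> leC z y \<longrightarrow> z \<in> I)"

text \<open>P is an interval order: isomorphic (via f) to a set of nonempty intervals of some chain C,
  ordered by I < J iff x < y for all x in I and y in J.  The chain lives in an arbitrary type 'c.\<close>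
definition interval_rep :: "'a set \<Rightarrow> ('a \<Rightarrow> 'a \<Rightarrow> bool) \<Rightarrow> 'c set \<Rightarrow> ('c \<Rightarrow> 'c \<Rightarrow> bool)
     \<Rightarrow> ('a \<Rightarrow> 'c set) \<Rightarrow> bool" where
  "interval_rep P le C leC f \<longleftrightarrow>
     chain_on C leC \<and> inj_on f P \<and> (\<forall>a\<in>P. interval_of C leC (f a)) \<and>
     (\<forall>a\<in>P. \<forall>b\<in>P. (le a b \<and> a \<noteq> b) \<longleftrightarrow>
        (\<forall>x\<in>f a. \<forall>y\<in>f b. leC x y \<and> x \<noteq> y))"

definition ideal_of :: "'a set \<Rightarrow> ('a \<Rightarrow> 'a \<Rightarrow> bool) \<Rightarrow> 'a set \<Rightarrow> bool" where
  "ideal_of P le I \<longleftrightarrow> I \<noteq> {} \<and> I \<subseteq> P \<and>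
     (\<forall>x\<in>I. \<forall>y\<in>P. le y x \<longrightarrow> y \<in> I) \<and>
     (\<forall>x\<in>I. \<forall>y\<in>I. \<exists>z\<in>I. le x z \<and> le y z)"

definition principal :: "('a \<Rightarrow> 'a \<Rightarrow> bool) \<Rightarrow> 'a set \<Rightarrow> bool" where
  "principal le I \<longleftrightarrow> (\<exists>m\<in>I. \<forall>x\<in>I. le x m)"

definition nonprincipal_ideals :: "'a set \<Rightarrow> ('a \<Rightarrow> 'a \<Rightarrow> bool) \<Rightarrow> 'a set set" where
  "nonprincipal_ideals P le = {I. ideal_of P le I \<and> \<not> principal le I}"

end

theory Submission
  imports Defs
begin

lemma nonpr_up:
  assumes "ideal_of P le I" "\<not> principal le I" "a \<in> I"
  shows "\<exists>z\<in>I. le a z \<and> a \<noteq> z"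
proof -
  obtain x where x: "x \<in> I" "\<not> le x a" using assms unfolding principal_def by blast
  have "\<forall>x\<in>I. \<forall>y\<in>I. \<exists>z\<in>I. le x z \<and> le y z" using assms(1) unfolding ideal_of_def by simp
  then obtain z where "z \<in> I" "le a z" "le x z" using assms(3) x(1) by blast
  then show ?thesis using x by blast
qed

theorem lemma1p4:
  fixes P :: "'a set" and le :: "'a \<Rightarrow> 'a \<Rightarrow> bool"
    and C :: "'c set" and leC :: "'c \<Rightarrow> 'c \<Rightarrow> bool" and f :: "'a \<Rightarrow> 'c set"
  assumes "poset_on P le"
    and "interval_rep P le C leC f"
  shows "\<forall>I\<in>nonprincipal_ideals P le. \<forall>J\<in>nonprincipal_ideals P le. I \<subseteq> J \<or> J \<subseteq> I"
proof (intro ballI, rule ccontr)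
  fix I J assume IJ: "I \<in> nonprincipal_ideals P le" "J \<in> nonprincipal_ideals P le"
    and nc: "\<not> (I \<subseteq> J \<or> J \<subseteq> I)"
  have iI: "ideal_of P le I" "\<not> principal le I" and iJ: "ideal_of P le J" "\<not> principal le J"
    using IJ unfolding nonprincipal_ideals_def by auto
  obtain a b where ab: "a \<in> I" "a \<notin> J" "b \<in> J" "b \<notin> I" using nc by blast
  obtain z where z: "z \<in> I" "le a z" "a \<noteq> z" using nonpr_up[OF iI ab(1)] by blast
  obtain w where w: "w \<in> J" "le b w" "b \<noteq> w" using nonpr_up[OF iJ ab(3)] by blast
  have PI: "I \<subseteq> P" and PJ: "J \<subseteq> P" using iI(1) iJ(1) unfolding ideal_of_def by simp_all
  have dcJ: "\<forall>x\<in>J. \<forall>y\<in>P. le y x \<longrightarrow> y \<in> J" using iJ(1) unfolding ideal_of_def by simp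
  have dcI: "\<forall>x\<in>I. \<forall>y\<in>P. le y x \<longrightarrow> y \<in> I" using iI(1) unfolding ideal_of_def by simp
  have naw: "\<not> le a w" using dcJ[rule_format, OF w(1)] ab PI by blast
  have nbz: "\<not> le b z" using dcI[rule_format, OF z(1)] ab PJ by blast
  have ch: "chain_on C leC" using assms(2) unfolding interval_rep_def by simp
  have rep: "\<forall>a\<in>P. \<forall>b\<in>P. (le a b \<and> a \<noteq> b) \<longleftrightarrow>
        (\<forall>x\<in>f a. \<forall>y\<in>f b. leC x y \<and> x \<noteq> y)" using assms(2) unfolding interval_rep_def by simp
  have sub: "\<forall>a\<in>P. f a \<subseteq> C" using assms(2) unfolding interval_rep_def interval_of_def by simp
  have inP: "a \<in> P" "b \<in> P" "z \<in> P" "w \<in> P" using ab z w PI PJ by auto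
  have r1: "\<not> (\<forall>x\<in>f a. \<forall>y\<in>f w. leC x y \<and> x \<noteq> y)" using rep[rule_format, OF inP(1) inP(4)] naw by simp
  obtain p q where pq: "p \<in> f a" "q \<in> f w" "\<not> (leC p q \<and> p \<noteq> q)"
    using r1 by blast
  have r2: "\<not> (\<forall>x\<in>f b. \<forall>y\<in>f z. leC x y \<and> x \<noteq> y)" using rep[rule_format, OF inP(2) inP(3)] nbz by simp
  obtain r s where rs: "r \<in> f b" "s \<in> f z" "\<not> (leC r s \<and> r \<noteq> s)"
    using r2 by blast
  have r3: "\<forall>x\<in>f a. \<forall>y\<in>f z. leC x y \<and> x \<noteq> y" using rep[rule_format, OF inP(1) inP(3)] z by simp
  have az: "leC p s" "p \<noteq> s" using r3 pq rs by auto
  have r4: "\<forall>x\<in>f b. \<forall>y\<in>f w. leC x y \<and> x \<noteq> y" using rep[rule_format, OF inP(2) inP(4)] w by simp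
  have bw: "leC r q" "r \<noteq> q" using r4 pq rs by auto
  have inC: "p \<in> C" "q \<in> C" "r \<in> C" "s \<in> C" using sub inP pq rs by auto
  have refl: "\<forall>x\<in>C. leC x x" and tot: "\<forall>x\<in>C. \<forall>y\<in>C. leC x y \<or> leC y x"
    and anti: "\<forall>x\<in>C. \<forall>y\<in>C. leC x y \<and> leC y x \<longrightarrow> x = y"
    and tr: "\<forall>x\<in>C. \<forall>y\<in>C. \<forall>z\<in>C. leC x y \<and> leC y z \<longrightarrow> leC x z"
    using ch unfolding chain_on_def poset_on_def by blast+
  have qp: "leC q p" using pq(3) tot[rule_format, OF inC(1) inC(2)] refl[rule_format, OF inC(1)] by auto
  have sr: "leC s r" using rs(3) tot[rule_format, OF inC(3) inC(4)] refl[rule_format, OF inC(3)] by auto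
  have "leC q s" using tr[rule_format, OF inC(2) inC(1) inC(4)] qp az(1) by blast
  then have "leC q r" using tr[rule_format, OF inC(2) inC(4) inC(3)] sr by blast
  then show False using anti[rule_format, OF inC(2) inC(3)] bw by blast
qed

end
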